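(* Let $(A_0,A_1,\partial_0,\partial_1,s)$ be a 1-truncated simplicial ring. Let $B=\{(f,g)\mid f,g\in A_1,\ \partial_1(f)=\partial_0(g)\}$, a subring of $A_1\times A_1$. Then the map $B\to A_1$, $(f,g)\mapsto f+g-s(a)$ with $a=\partial_1(f)=\partial_0(g)$, is a ring homomorphism if and only if $(\ker\partial_0)\cdot(\ker\partial_1)=0$.
   Context: Rings are commutative and unital. A 1-truncated simplicial ring is a collection of rings $A_0,A_1$ and ring homomorphisms $\partial_0,\partial_1:A_1\to A_0$, $s:A_0\to A_1$ with $\partial_0 s=\partial_1 s=\mathrm{id}_{A_0}$. *)

theory Defs
  imports "HOL-Algebra.Algebra"
begin

definition trunc1_simplicial_ring ::
  "('a, 'm) ring_scheme \<Rightarrow> ('b, 'n) ring_scheme \<Rightarrow> ('b \<Rightarrow> 'a) \<Rightarrow> ('b \<Rightarrow> 'a) \<Rightarrow> ('a \<Rightarrow> 'b) \<Rightarrow> bool"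
where
  "trunc1_simplicial_ring A0 A1 d0 d1 s \<longleftrightarrow>
     cring A0 \<and> cring A1 \<and>
     d0 \<in> ring_hom A1 A0 \<and> d1 \<in> ring_hom A1 A0 \<and> s \<in> ring_hom A0 A1 \<and>
     (\<forall>a \<in> carrier A0. d0 (s a) = a) \<and> (\<forall>a \<in> carrier A0. d1 (s a) = a)"

definition composable_pairs ::
  "('b, 'n) ring_scheme \<Rightarrow> ('b \<Rightarrow> 'a) \<Rightarrow> ('b \<Rightarrow> 'a) \<Rightarrow> ('b \<times> 'b) ring"
where
  "composable_pairs A1 d0 d1 =
     (RDirProd A1 A1)\<lparr>carrier := {(f, g). f \<in> carrier A1 \<and> g \<in> carrier A1 \<and> d1 f = d0 g}\<rparr>"

definition compose_map ::
  "('b, 'n) ring_scheme \<Rightarrow> ('b \<Rightarrow> 'a) \<Rightarrow> ('a \<Rightarrow> 'b) \<Rightarrow> 'b \<times> 'b \<Rightarrow> 'b"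
where
  "compose_map A1 d1 s = (\<lambda>(f, g). f \<oplus>\<^bsub>A1\<^esub> g \<ominus>\<^bsub>A1\<^esub> s (d1 f))"

end

theory Submission
  imports Defs
begin

lemma key_identity:
  fixes R (structure)
  assumes "cring R" and c: "f \<in> carrier R" "g \<in> carrier R" "f' \<in> carrier R" "g' \<in> carrier R" "p \<in> carrier R" "q \<in> carrier R"
  shows "(f \<oplus> g \<ominus> p) \<otimes> (f' \<oplus> g' \<ominus> q)
     = f \<otimes> f' \<oplus> g \<otimes> g' \<ominus> p \<otimes> q \<oplus> (f \<ominus> p) \<otimes> (g' \<ominus> q) \<oplus> (g \<ominus> p) \<otimes> (f' \<ominus> q)"
proof -
  interpret cring R by fact
  show ?thesis using c by algebra
qed

lemma cp_carrier: "carrier (composable_pairs A1 d0 d1) = {(f, g). f \<in> carrier A1 \<and> g \<in> carrier A1 \<and> d1 f = d0 g}"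
  unfolding composable_pairs_def by simp

lemma cp_mult: "(f, g) \<otimes>\<^bsub>composable_pairs A1 d0 d1\<^esub> (f', g') = (f \<otimes>\<^bsub>A1\<^esub> f', g \<otimes>\<^bsub>A1\<^esub> g')"
  unfolding composable_pairs_def RDirProd_def DirProd_def by (simp add: monoid.defs)

lemma cp_add: "(f, g) \<oplus>\<^bsub>composable_pairs A1 d0 d1\<^esub> (f', g') = (f \<oplus>\<^bsub>A1\<^esub> f', g \<oplus>\<^bsub>A1\<^esub> g')"
  unfolding composable_pairs_def RDirProd_def DirProd_def by (simp add: monoid.defs)

lemma cp_one: "\<one>\<^bsub>composable_pairs A1 d0 d1\<^esub> = (\<one>\<^bsub>A1\<^esub>, \<one>\<^bsub>A1\<^esub>)"
  unfolding composable_pairs_def RDirProd_def DirProd_def by (simp add: monoid.defs)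

theorem lemma3p4p5:
  fixes A0 :: "('a, 'm) ring_scheme" and A1 :: "('b, 'n) ring_scheme"
    and d0 d1 :: "'b \<Rightarrow> 'a" and s :: "'a \<Rightarrow> 'b"
  assumes "trunc1_simplicial_ring A0 A1 d0 d1 s"
  shows "compose_map A1 d1 s \<in> ring_hom (composable_pairs A1 d0 d1) A1 \<longleftrightarrow>
         ideal_prod A1 (a_kernel A1 A0 d0) (a_kernel A1 A0 d1) = {\<zero>\<^bsub>A1\<^esub>}"
proof -
  note T = assms[unfolded trunc1_simplicial_ring_def]
  interpret R0: cring A0 using T by blast
  interpret R1: cring A1 using T by blast
  interpret H0: ring_hom_ring A1 A0 d0 using T by (intro ring_hom_ringI2) (auto simp: cring.axioms(1))
  interpret H1: ring_hom_ring A1 A0 d1 using T by (intro ring_hom_ringI2) (auto simp: cring.axioms(1))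
  interpret HS: ring_hom_ring A0 A1 s using T by (intro ring_hom_ringI2) (auto simp: cring.axioms(1))
  have ds0: "\<And>a. a \<in> carrier A0 \<Longrightarrow> d0 (s a) = a" and ds1: "\<And>a. a \<in> carrier A0 \<Longrightarrow> d1 (s a) = a"
    using T by auto
  have ker: "\<And>h x. x \<in> a_kernel A1 A0 h \<longleftrightarrow> x \<in> carrier A1 \<and> h x = \<zero>\<^bsub>A0\<^esub>"
    by (simp add: a_kernel_def')
  let ?K0 = "a_kernel A1 A0 d0" and ?K1 = "a_kernel A1 A0 d1"
  have I0: "ideal ?K0 A1" by (rule H0.kernel_is_ideal)
  have I1: "ideal ?K1 A1" by (rule H1.kernel_is_ideal)
  have prodiff: "ideal_prod A1 ?K0 ?K1 = {\<zero>\<^bsub>A1\<^esub>} \<longleftrightarrow>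
     (\<forall>x\<in>?K0. \<forall>y\<in>?K1. x \<otimes>\<^bsub>A1\<^esub> y = \<zero>\<^bsub>A1\<^esub>)"
  proof
    assume "ideal_prod A1 ?K0 ?K1 = {\<zero>\<^bsub>A1\<^esub>}"
    then show "\<forall>x\<in>?K0. \<forall>y\<in>?K1. x \<otimes>\<^bsub>A1\<^esub> y = \<zero>\<^bsub>A1\<^esub>"
      using ideal_prod.prod[of _ ?K0 _ ?K1 A1] by blast
  next
    assume Z: "\<forall>x\<in>?K0. \<forall>y\<in>?K1. x \<otimes>\<^bsub>A1\<^esub> y = \<zero>\<^bsub>A1\<^esub>"
    have "t = \<zero>\<^bsub>A1\<^esub>" if "t \<in> ideal_prod A1 ?K0 ?K1" for t
      using that by (induct t rule: ideal_prod.induct) (use Z in auto)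
    moreover have "\<zero>\<^bsub>A1\<^esub> \<in> ideal_prod A1 ?K0 ?K1"
      using ideal_prod.prod[of "\<zero>\<^bsub>A1\<^esub>" ?K0 "\<zero>\<^bsub>A1\<^esub>" ?K1 A1] I0 I1
      by (simp add: additive_subgroup.zero_closed ideal.axioms(1))
    ultimately show "ideal_prod A1 ?K0 ?K1 = {\<zero>\<^bsub>A1\<^esub>}" by blast
  qed
  let ?phi = "compose_map A1 d1 s"
  have phi: "?phi (f, g) = f \<oplus>\<^bsub>A1\<^esub> g \<ominus>\<^bsub>A1\<^esub> s (d1 f)" for f g
    by (simp add: compose_map_def)
  show ?thesis
    unfolding prodiff
  proof
    assume hom: "?phi \<in> ring_hom (composable_pairs A1 d0 d1) A1"
    show "\<forall>x\<in>?K0. \<forall>y\<in>?K1. x \<otimes>\<^bsub>A1\<^esub> y = \<zero>\<^bsub>A1\<^esub>"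
    proof (intro ballI)
      fix x y assume x: "x \<in> ?K0" and y: "y \<in> ?K1"
      have xc: "x \<in> carrier A1" "d0 x = \<zero>\<^bsub>A0\<^esub>" using x ker by auto
      have yc: "y \<in> carrier A1" "d1 y = \<zero>\<^bsub>A0\<^esub>" using y ker by auto
      have p1: "(y, \<zero>\<^bsub>A1\<^esub>) \<in> carrier (composable_pairs A1 d0 d1)"
        using yc by (simp add: cp_carrier)
      have p2: "(\<zero>\<^bsub>A1\<^esub>, x) \<in> carrier (composable_pairs A1 d0 d1)"
        using xc by (simp add: cp_carrier)
      have "?phi ((y, \<zero>\<^bsub>A1\<^esub>) \<otimes>\<^bsub>composable_pairs A1 d0 d1\<^esub> (\<zero>\<^bsub>A1\<^esub>, x))
            = ?phi (y, \<zero>\<^bsub>A1\<^esub>) \<otimes>\<^bsub>A1\<^esub> ?phi (\<zero>\<^bsub>A1\<^esub>, x)"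
        using ring_hom_mult[OF hom p1 p2] .
      moreover have "?phi ((y, \<zero>\<^bsub>A1\<^esub>) \<otimes>\<^bsub>composable_pairs A1 d0 d1\<^esub> (\<zero>\<^bsub>A1\<^esub>, x)) = \<zero>\<^bsub>A1\<^esub>"
        using xc yc by (simp add: cp_mult phi R1.minus_zero a_minus_def)
      moreover have "?phi (y, \<zero>\<^bsub>A1\<^esub>) = y" using yc by (simp add: phi R1.minus_zero a_minus_def)
      moreover have "?phi (\<zero>\<^bsub>A1\<^esub>, x) = x" using xc by (simp add: phi R1.minus_zero a_minus_def)
      ultimately have "y \<otimes>\<^bsub>A1\<^esub> x = \<zero>\<^bsub>A1\<^esub>" by simp
      then show "x \<otimes>\<^bsub>A1\<^esub> y = \<zero>\<^bsub>A1\<^esub>" using xc yc R1.m_comm by simp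
    qed
  next
    assume Z: "\<forall>x\<in>?K0. \<forall>y\<in>?K1. x \<otimes>\<^bsub>A1\<^esub> y = \<zero>\<^bsub>A1\<^esub>"
    have Z': "x \<otimes>\<^bsub>A1\<^esub> y = \<zero>\<^bsub>A1\<^esub>" "y \<otimes>\<^bsub>A1\<^esub> x = \<zero>\<^bsub>A1\<^esub>"
      if "x \<in> carrier A1" "d0 x = \<zero>\<^bsub>A0\<^esub>" "y \<in> carrier A1" "d1 y = \<zero>\<^bsub>A0\<^esub>" for x y
      using Z that ker R1.m_comm by auto
    show "?phi \<in> ring_hom (composable_pairs A1 d0 d1) A1"
    proof (rule ring_hom_memI)
      fix u assume "u \<in> carrier (composable_pairs A1 d0 d1)"
      then show "?phi u \<in> carrier A1"
        by (auto simp: cp_carrier phi)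
    next
      fix u v assume u: "u \<in> carrier (composable_pairs A1 d0 d1)" and v: "v \<in> carrier (composable_pairs A1 d0 d1)"
      obtain f g where fg: "u = (f, g)" "f \<in> carrier A1" "g \<in> carrier A1" "d1 f = d0 g"
        using u by (auto simp: cp_carrier)
      obtain f' g' where fg': "v = (f', g')" "f' \<in> carrier A1" "g' \<in> carrier A1" "d1 f' = d0 g'"
        using v by (auto simp: cp_carrier)
      let ?p = "s (d1 f)" and ?q = "s (d1 f')"
      have pc: "?p \<in> carrier A1" "?q \<in> carrier A1" using fg fg' by auto
      have k1: "d1 (f \<ominus>\<^bsub>A1\<^esub> ?p) = \<zero>\<^bsub>A0\<^esub>" "d1 (f' \<ominus>\<^bsub>A1\<^esub> ?q) = \<zero>\<^bsub>A0\<^esub>"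
        using fg fg' ds1 by (auto simp: a_minus_def R0.r_neg)
      have k0: "d0 (g \<ominus>\<^bsub>A1\<^esub> ?p) = \<zero>\<^bsub>A0\<^esub>" "d0 (g' \<ominus>\<^bsub>A1\<^esub> ?q) = \<zero>\<^bsub>A0\<^esub>"
        using fg fg' ds0 by (auto simp: a_minus_def R0.r_neg)
      have z1: "(f \<ominus>\<^bsub>A1\<^esub> ?p) \<otimes>\<^bsub>A1\<^esub> (g' \<ominus>\<^bsub>A1\<^esub> ?q) = \<zero>\<^bsub>A1\<^esub>"
        using Z'(2)[of "g' \<ominus>\<^bsub>A1\<^esub> ?q" "f \<ominus>\<^bsub>A1\<^esub> ?p"] k0 k1 fg fg' pc by auto
      have z2: "(g \<ominus>\<^bsub>A1\<^esub> ?p) \<otimes>\<^bsub>A1\<^esub> (f' \<ominus>\<^bsub>A1\<^esub> ?q) = \<zero>\<^bsub>A1\<^esub>"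
        using Z'(1)[of "g \<ominus>\<^bsub>A1\<^esub> ?p" "f' \<ominus>\<^bsub>A1\<^esub> ?q"] k0 k1 fg fg' pc by auto
      have sq: "s (d1 (f \<otimes>\<^bsub>A1\<^esub> f')) = ?p \<otimes>\<^bsub>A1\<^esub> ?q" using fg fg' by simp
      show "?phi (u \<otimes>\<^bsub>composable_pairs A1 d0 d1\<^esub> v) = ?phi u \<otimes>\<^bsub>A1\<^esub> ?phi v"
        unfolding fg fg' cp_mult phi sq
        using key_identity[OF R1.is_cring fg(2,3) fg'(2,3) pc] z1 z2 fg fg' pc by simp
    next
      fix u v assume u: "u \<in> carrier (composable_pairs A1 d0 d1)" and v: "v \<in> carrier (composable_pairs A1 d0 d1)"
      obtain f g where fg: "u = (f, g)" "f \<in> carrier A1" "g \<in> carrier A1" "d1 f = d0 g"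
        using u by (auto simp: cp_carrier)
      obtain f' g' where fg': "v = (f', g')" "f' \<in> carrier A1" "g' \<in> carrier A1" "d1 f' = d0 g'"
        using v by (auto simp: cp_carrier)
      have pc: "s (d1 f) \<in> carrier A1" "s (d1 f') \<in> carrier A1" using fg fg' by auto
      show "?phi (u \<oplus>\<^bsub>composable_pairs A1 d0 d1\<^esub> v) = ?phi u \<oplus>\<^bsub>A1\<^esub> ?phi v"
        unfolding fg fg' cp_add phi using fg fg' pc
        by (simp add: R1.ring_simprules) (algebra)
    next
      show "?phi \<one>\<^bsub>composable_pairs A1 d0 d1\<^esub> = \<one>\<^bsub>A1\<^esub>"
        by (simp add: cp_one phi R1.ring_simprules)
    qed
  qed
qed

end
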